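(* The series below converge and $$\sum_{n=0}^{\infty}\left(e^{-1}n!-D_n\right)=e^{-1}\int_0^{-1}\frac{e^{-t}}{1-t}\,dt=e^{-1}\sum_{n=0}^{\infty}D_n\frac{(-1)^{n+1}}{(n+1)!}.$$
   Context: $D_n=n!\sum_{k=0}^{n}\frac{(-1)^k}{k!}$ are the derangement numbers ($n\ge0$). Note $e^{-1}n!-D_n=n!\left(e^{-1}-\sum_{k=0}^n\frac{(-1)^k}{k!}\right)$. *)

theory Defs
  imports "HOL-Analysis.Analysis"
begin

definition D :: "nat \<Rightarrow> real" where
  "D n = fact n * (\<Sum>k\<le>n. (-1) ^ k / fact k)"

end

theory Submission imports Defs begin

lemma D_Suc: "D (Suc n) = real (Suc n) * D n + (-1) ^ Suc n"
proof -
  have "D (Suc n) = fact (Suc n) * (\<Sum>k\<le>n. (-1) ^ k / fact k) + fact (Suc n) * ((-1) ^ Suc n / fact (Suc n))"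
    unfolding D_def by (simp add: ring_distribs del: fact_Suc)
  also have "\<dots> = real (Suc n) * D n + (-1) ^ Suc n"
    unfolding D_def by (simp del: fact_Suc add: fact_Suc[of n])
  finally show ?thesis .
qed

lemma pow_int: "((\<lambda>x::real. x ^ n) has_integral ((-1) ^ n / real (n+1))) {-1..0}"
proof -
  have d: "((\<lambda>x. x^Suc n / real (Suc n)) has_real_derivative x^n) (at x)" for x :: real
    proof -
    have "((\<lambda>x. x^Suc n / real (Suc n)) has_real_derivative (real (Suc n) * x ^ (Suc n - Suc 0)) / real (Suc n)) (at x)"
      by (rule DERIV_cdivide[OF DERIV_pow])
    moreover have "real (Suc n) \<noteq> 0" by (simp only: of_nat_eq_0_iff Suc_neq_Zero not_False_eq_True)
    ultimately show ?thesis by (simp only: diff_Suc_Suc minus_nat.diff_0 nonzero_mult_div_cancel_left[OF \<open>real (Suc n) \<noteq> 0\<close>])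
  qed
  have "((\<lambda>x::real. x ^ n) has_integral ((\<lambda>x. x^Suc n / real (Suc n)) 0 - (\<lambda>x. x^Suc n / real (Suc n)) (-1))) {-1..0}"
    by (rule fundamental_theorem_of_calculus, simp, rule has_real_derivative_iff_has_vector_derivative[THEN iffD1], rule has_field_derivative_at_within[OF d])
  then show ?thesis by simp
qed

fun G :: "nat \<Rightarrow> real \<Rightarrow> real" where
  "G 0 x = - exp (-x)"
| "G (Suc n) x = real (Suc n) * G n x - exp (-x) * x ^ Suc n"

lemma G_deriv: "(G n has_real_derivative exp (-x) * x ^ n) (at x)"
proof (induction n)
  case 0 then show ?case by (auto intro!: derivative_eq_intros)
next
  case (Suc n)
  show ?case unfolding G.simps
    by (rule derivative_eq_intros Suc refl)+ (simp add: algebra_simps)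
qed

lemma D0: "D 0 = 1" by (simp add: D_def)

lemma G0: "G n 0 = - fact n"
  by (induction n) auto

lemma Gm1: "G n (-1) = - exp 1 * D n"
  by (induction n) (simp_all add: D_Suc D0 algebra_simps)

lemma m_int: "((\<lambda>x::real. exp (-x) * x ^ n) has_integral (exp 1 * D n - fact n)) {-1..0}"
proof -
  have "((\<lambda>x::real. exp (-x) * x ^ n) has_integral (G n 0 - G n (-1))) {-1..0}"
    by (rule fundamental_theorem_of_calculus, simp, rule has_real_derivative_iff_has_vector_derivative[THEN iffD1], rule has_field_derivative_at_within[OF G_deriv])
  then show ?thesis by (simp add: G0 Gm1)
qed


lemma div_le_self': "0 \<le> a \<Longrightarrow> 1 \<le> b \<Longrightarrow> a / b \<le> (a::real)"
  using mult_left_mono[of 1 b a] by (simp add: divide_le_eq)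

lemma bound_int:
  fixes g :: "real \<Rightarrow> real"
  assumes g: "continuous_on {-1..0} g" and b: "\<And>x. x \<in> {-1..0} \<Longrightarrow> \<bar>g x\<bar> \<le> C * (-x) ^ N"
  shows "\<bar>integral {-1..0} g\<bar> \<le> C / real (Suc N)"
proof -
  have "((\<lambda>x. C * (-1) ^ N * x ^ N) has_integral (C * (-1) ^ N * ((-1) ^ N / real (N+1)))) {-1..0::real}"
    by (rule has_integral_mult_right[OF pow_int])
  moreover have "C * (-1) ^ N * ((-1) ^ N / real (N+1)) = C / real (Suc N)"
    by (simp add: power_mult_distrib[symmetric])
  moreover have "\<And>x::real. C * (-1) ^ N * x ^ N = C * (-x) ^ N"
    by (simp add: power_minus')
  ultimately have hi: "((\<lambda>x. C * (-x) ^ N) has_integral C / real (Suc N)) {-1..0::real}"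
    by simp
  have "norm (integral {-1..0} g) \<le> integral {-1..0} (\<lambda>x. C * (-x) ^ N)"
    by (rule integral_norm_bound_integral) (use g b hi in \<open>auto intro: integrable_continuous_interval\<close>)
  moreover have e: "integral {-1..0} (\<lambda>x. C * (-x) ^ N) = C / real (Suc N)"
    using hi by (rule integral_unique)
  ultimately show ?thesis by (simp only: e real_norm_def)
qed

lemma conv_lemma:
  fixes s :: "nat \<Rightarrow> real"
  assumes "\<And>N. \<bar>s N - L\<bar> \<le> C / real (Suc N)"
  shows "s \<longlonglongrightarrow> L"
proof -
  have "(\<lambda>N. C / real (Suc N)) \<longlonglongrightarrow> 0"
    using LIMSEQ_Suc[OF lim_const_over_n[of C]] by simp
  then have "(\<lambda>N. s N - L) \<longlonglongrightarrow> 0"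
    by (rule Lim_null_comparison[rotated]) (use assms in simp)
  then show ?thesis by (rule LIM_zero_cancel)
qed

definition ff :: "real \<Rightarrow> real" where "ff x = exp (-x) / (1 - x)"

lemma ff_cont: "continuous_on {-1..0} ff"
  unfolding ff_def by (intro continuous_intros) auto

lemma a_repr: "exp (-1) * fact n - D n = - exp (-1) * integral {-1..0} (\<lambda>x. exp (-x) * x ^ n)"
proof -
  have I: "integral {-1..0} (\<lambda>x. exp (-x) * x ^ n) = exp 1 * D n - fact n"
    using m_int by (rule integral_unique)
  have E: "exp (-1) * exp 1 = (1::real)" by (simp add: exp_minus field_simps)
  have "- exp (-1) * (exp 1 * D n - fact n) = - (exp (-1) * exp 1) * D n + exp (-1) * fact n"
    by (simp add: algebra_simps)
  then show ?thesis unfolding I E by simp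
qed

lemma partialA:
  "\<bar>(\<Sum>n<N. exp (-1) * fact n - D n) - (- exp (-1) * integral {-1..0} ff)\<bar> \<le> 1 / real (Suc N)"
proof -
  define h where "h x = exp (-x) * x ^ N / (1 - x)" for x :: real
  have hc: "continuous_on {-1..0} h" unfolding h_def by (intro continuous_intros) auto
  have int: "(\<lambda>x::real. exp (-x) * x ^ n) integrable_on {-1..0::real}" for n
    by (intro integrable_continuous_interval continuous_intros)
  have "(\<Sum>n<N. exp (-1) * fact n - D n) = - exp (-1) * (\<Sum>n<N. integral {-1..0} (\<lambda>x::real. exp (-x) * x ^ n))"
    by (simp add: a_repr sum_distrib_left)
  also have "(\<Sum>n<N. integral {-1..0} (\<lambda>x::real. exp (-x) * x ^ n)) = integral {-1..0} (\<lambda>x::real. \<Sum>n<N. exp (-x) * x ^ n)"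
    by (rule integral_sum[symmetric]) (auto intro!: integrable_continuous_interval continuous_intros)
  also have "\<dots> = integral {-1..0} (\<lambda>x. ff x - h x)"
  proof (rule integral_cong)
    fix x :: real assume "x \<in> {-1..0}"
    then have "x \<noteq> 1" by auto
    have "(\<Sum>n<N. exp (-x) * x ^ n) = exp (-x) * (\<Sum>n<N. x ^ n)"
      by (simp add: sum_distrib_left)
    also have "\<dots> = exp (-x) * ((1 - x ^ N) / (1 - x))"
      using \<open>x \<noteq> 1\<close> by (simp add: sum_gp_strict)
    also have "\<dots> = ff x - h x"
      unfolding ff_def h_def by (simp add: diff_divide_distrib right_diff_distrib)
    finally show "(\<Sum>n<N. exp (-x) * x ^ n) = ff x - h x" .
  qed
  also have "\<dots> = integral {-1..0} ff - integral {-1..0} h"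
    by (rule integral_diff) (auto intro: integrable_continuous_interval ff_cont hc)
  finally have S: "(\<Sum>n<N. exp (-1) * fact n - D n) = - exp (-1) * (integral {-1..0} ff - integral {-1..0} h)" .
  have eq: "(\<Sum>n<N. exp (-1) * fact n - D n) - (- exp (-1) * integral {-1..0} ff)
      = exp (-1) * integral {-1..0} h" unfolding S by (simp add: algebra_simps)
  have "\<bar>integral {-1..0} h\<bar> \<le> exp 1 / real (Suc N)"
  proof (rule bound_int[OF hc])
    fix x :: real assume x: "x \<in> {-1..0}"
    have "\<bar>h x\<bar> = exp (-x) * (-x) ^ N / (1 - x)"
      using x by (simp add: h_def abs_mult power_abs abs_div)
    also have "\<dots> \<le> exp (-x) * (-x) ^ N"
      using x by (intro div_le_self') auto
    also have "\<dots> \<le> exp 1 * (-x) ^ N"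
      using x by (intro mult_right_mono) auto
    finally show "\<bar>h x\<bar> \<le> exp 1 * (- x) ^ N" .
  qed
  then have "exp (-1) * \<bar>integral {-1..0} h\<bar> \<le> exp (-1) * (exp 1 / real (Suc N))"
    by (intro mult_left_mono) auto
  moreover have "exp (-1) * (exp 1 / real (Suc N)) = 1 / real (Suc N)"
    by (simp add: exp_minus field_simps)
  ultimately show ?thesis unfolding eq by (simp add: abs_mult)
qed


definition c :: "nat \<Rightarrow> real" where "c N = (\<Sum>k<N. (-1) ^ k / fact k)"

lemma Dfact: "D n / fact n = c (Suc n)"
  unfolding D_def c_def by (simp add: lessThan_Suc_atMost)

lemma c_Suc: "c (Suc N) = c N + (-1) ^ N / fact N"
  unfolding c_def by simp

lemma c_bound: "\<bar>c N\<bar> \<le> 4"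
proof -
  obtain t where t: "\<bar>t\<bar> \<le> \<bar>-1::real\<bar>" "exp (-1) = (\<Sum>m<N. (-1) ^ m / fact m) + exp t / fact N * (-1) ^ N"
    using Maclaurin_exp_le[of "-1" N] by blast
  have "exp t \<le> exp 1" using t(1) by simp
  moreover have "exp t / fact N \<le> exp t" by (rule div_le_self') auto
  ultimately have e3: "exp t / fact N \<le> 3" using exp_le by linarith
  have ab: "\<bar>exp t / fact N * (-1) ^ N\<bar> = exp t / fact N" by (simp add: abs_mult)
  have e1: "\<bar>exp (-1)\<bar> \<le> (1::real)" by simp
  have cN: "c N = exp (-1) - exp t / fact N * (-1) ^ N" using t(2) unfolding c_def by simp
  have "\<bar>c N\<bar> \<le> \<bar>exp (-1)\<bar> + \<bar>exp t / fact N * (-1) ^ N\<bar>"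
    unfolding cN by (rule abs_triangle_ineq4)
  then show ?thesis using ab e1 e3 by linarith
qed

lemma Pid: "(1 - x) * (\<Sum>n<N. D n / fact n * x ^ n) = (\<Sum>k<N. (-x) ^ k / fact k) - x ^ N * c N"
proof (induction N)
  case 0 then show ?case by (simp add: c_def)
next
  case (Suc N)
  have "(1 - x) * (\<Sum>n<Suc N. D n / fact n * x ^ n) = (1 - x) * (\<Sum>n<N. D n / fact n * x ^ n) + (1 - x) * (c (Suc N) * x ^ N)"
    by (simp add: Dfact distrib_left)
  also have "\<dots> = (\<Sum>k<N. (-x) ^ k / fact k) - x ^ N * c N + (1 - x) * (c (Suc N) * x ^ N)"
    using Suc by simp
  also have "\<dots> = (\<Sum>k<N. (-x) ^ k / fact k) + (-x) ^ N / fact N - x ^ Suc N * c (Suc N)"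
    by (simp add: c_Suc field_simps power_minus')
  finally show ?case by simp
qed

lemma b_repr: "D n * (-1) ^ (n + 1) / fact (n + 1) = - (D n / fact n) * integral {-1..0} (\<lambda>x::real. x ^ n)"
proof -
  have I: "integral {-1..0} (\<lambda>x::real. x ^ n) = (-1) ^ n / real (n+1)"
    using pow_int by (rule integral_unique)
  show ?thesis unfolding I by (simp add: field_simps)
qed

lemma partialB:
  "\<bar>(\<Sum>n<N. D n * (-1) ^ (n + 1) / fact (n + 1)) - (- integral {-1..0} ff)\<bar> \<le> 7 / real (Suc N)"
proof -
  define P where "P x = (\<Sum>n<N. D n / fact n * x ^ n)" for x :: real
  define q where "q x = ff x - P x" for x :: real
  have Pc: "continuous_on {-1..0} P" unfolding P_def by (intro continuous_intros)
  have qc: "continuous_on {-1..0} q" unfolding q_def by (intro continuous_intros ff_cont Pc)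
  have "(\<Sum>n<N. D n * (-1) ^ (n + 1) / fact (n + 1)) = - (\<Sum>n<N. integral {-1..0} (\<lambda>x::real. D n / fact n * x ^ n))"
    unfolding b_repr by (simp add: sum_negf)
  also have "(\<Sum>n<N. integral {-1..0} (\<lambda>x::real. D n / fact n * x ^ n)) = integral {-1..0} P"
    unfolding P_def by (rule integral_sum[symmetric]) (auto intro!: integrable_continuous_interval continuous_intros)
  finally have "(\<Sum>n<N. D n * (-1) ^ (n + 1) / fact (n + 1)) - (- integral {-1..0} ff) = integral {-1..0} ff - integral {-1..0} P"
    by simp
  also have "\<dots> = integral {-1..0} q"
    unfolding q_def by (rule integral_diff[symmetric]) (auto intro: integrable_continuous_interval ff_cont Pc)
  finally have eq: "(\<Sum>n<N. D n * (-1) ^ (n + 1) / fact (n + 1)) - (- integral {-1..0} ff) = integral {-1..0} q" .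
  have "\<bar>integral {-1..0} q\<bar> \<le> 7 / real (Suc N)"
  proof (rule bound_int[OF qc])
    fix x :: real assume x: "x \<in> {-1..0}"
    then have x1: "1 - x \<ge> 1" and xn: "-x \<ge> 0" "-x \<le> 1" by auto
    have "P x = ((\<Sum>k<N. (-x) ^ k / fact k) - x ^ N * c N) / (1 - x)"
      using Pid[of x N] x1 unfolding P_def by (simp add: field_simps)
    then have qx: "q x = (exp (-x) - (\<Sum>k<N. (-x) ^ k / fact k) + x ^ N * c N) / (1 - x)"
      unfolding q_def ff_def using x1 by (simp add: diff_divide_distrib add_divide_distrib)
    obtain t where t: "\<bar>t\<bar> \<le> \<bar>-x\<bar>" "exp (-x) = (\<Sum>m<N. (-x) ^ m / fact m) + exp t / fact N * (-x) ^ N"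
      using Maclaurin_exp_le[of "-x" N] by blast
    have "t \<le> 1" using t(1) xn by simp
    then have "exp t \<le> exp 1" by simp
    moreover have "exp t / fact N \<le> exp t" by (rule div_le_self') auto
    ultimately have et: "exp t / fact N \<le> 3" using exp_le by linarith
    have pN: "0 \<le> (-x) ^ N" using xn by simp
    have "exp t / fact N * (-x) ^ N \<le> 3 * (-x) ^ N"
      using et pN by (rule mult_right_mono)
    moreover have "\<bar>exp t / fact N * (-x) ^ N\<bar> = exp t / fact N * (-x) ^ N"
      using pN by simp
    moreover have "exp (-x) - (\<Sum>k<N. (-x) ^ k / fact k) = exp t / fact N * (-x) ^ N"
      using t(2) by simp
    ultimately have A: "\<bar>exp (-x) - (\<Sum>k<N. (-x) ^ k / fact k)\<bar> \<le> 3 * (-x) ^ N"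
      by simp
    have B: "\<bar>x ^ N * c N\<bar> \<le> 4 * (-x) ^ N"
    proof -
      have "\<bar>x ^ N\<bar> = (-x) ^ N" using xn by (simp add: power_abs)
      then show ?thesis using mult_right_mono[OF c_bound[of N] pN] by (simp add: abs_mult mult.commute)
    qed
    have num: "\<bar>exp (-x) - (\<Sum>k<N. (-x) ^ k / fact k) + x ^ N * c N\<bar> \<le> 7 * (-x) ^ N"
      using A B by linarith
    have "\<bar>q x\<bar> = \<bar>exp (-x) - (\<Sum>k<N. (-x) ^ k / fact k) + x ^ N * c N\<bar> / (1 - x)"
      using x1 unfolding qx by (simp add: abs_div)
    also have "\<dots> \<le> \<bar>exp (-x) - (\<Sum>k<N. (-x) ^ k / fact k) + x ^ N * c N\<bar>"
      using x1 by (intro div_le_self') auto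
    finally show "\<bar>q x\<bar> \<le> 7 * (-x) ^ N" using num by linarith
  qed
  then show ?thesis unfolding eq .
qed


lemma m1e: "(-1::ereal) = ereal (-1)"
  by (simp add: one_ereal_def)

lemma LB: "(LBINT t=0..-1. exp (-t) / (1 - t)) = - integral {-1..0} ff"
proof -
  have "(LBINT t=0..-1. exp (-t) / (1 - t)) = (LBINT t=0..-1. ff t)"
    by (simp add: ff_def)
  also have "\<dots> = - (LBINT t=-1..0. ff t)"
    by (rule interval_integral_endpoints_reverse)
  also have "(LBINT t=-1..0. ff t) = integral {-1..0} ff"
    using interval_integral_eq_integral[of "-1" 0 ff] borel_integrable_atLeastAtMost'[OF ff_cont]
    unfolding m1e zero_ereal_def by simp
  finally show ?thesis .
qed

lemma sA: "(\<lambda>n. exp (-1) * fact n - D n) sums (- exp (-1) * integral {-1..0} ff)"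
  unfolding sums_def by (rule conv_lemma[OF partialA])

lemma sB: "(\<lambda>n. D n * (-1) ^ (n + 1) / fact (n + 1)) sums (- integral {-1..0} ff)"
  unfolding sums_def by (rule conv_lemma[OF partialB])

lemma intg: "interval_lebesgue_integrable lborel 0 (-1) (\<lambda>t::real. exp (-t) / (1 - t))"
proof -
  have "interval_lebesgue_integrable lborel (ereal 0) (ereal (-1)) (\<lambda>t::real. exp (-t) / (1 - t))"
    by (rule interval_integrable_isCont) (auto intro!: continuous_intros)
  then show ?thesis unfolding m1e zero_ereal_def .
qed


theorem mainTheorem13:
  shows "summable (\<lambda>n. exp (-1) * fact n - D n)
    \<and> summable (\<lambda>n. D n * (-1) ^ (n + 1) / fact (n + 1))
    \<and> interval_lebesgue_integrable lborel 0 (-1) (\<lambda>t::real. exp (-t) / (1 - t))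
    \<and> (\<Sum>n. exp (-1) * fact n - D n) = exp (-1) * (LBINT t=0..-1. exp (-t) / (1 - t))
    \<and> exp (-1) * (LBINT t=0..-1. exp (-t) / (1 - t))
        = exp (-1) * (\<Sum>n. D n * (-1) ^ (n + 1) / fact (n + 1))"
proof -
  have a1: "summable (\<lambda>n. exp (-1) * fact n - D n)"
    using sA by (rule sums_summable)
  have a2: "(\<Sum>n. exp (-1) * fact n - D n) = - exp (-1) * integral {-1..0} ff"
    using sA by (rule sums_unique[symmetric])
  have b1: "summable (\<lambda>n. D n * (-1) ^ (n + 1) / fact (n + 1))"
    using sB by (rule sums_summable)
  have b2: "(\<Sum>n. D n * (-1) ^ (n + 1) / fact (n + 1)) = - integral {-1..0} ff"
    using sB by (rule sums_unique[symmetric])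
  show ?thesis
  proof (intro conjI)
    show "summable (\<lambda>n. exp (-1) * fact n - D n)" by (rule a1)
    show "summable (\<lambda>n. D n * (-1) ^ (n + 1) / fact (n + 1))" by (rule b1)
    show "interval_lebesgue_integrable lborel 0 (-1) (\<lambda>t::real. exp (-t) / (1 - t))" by (rule intg)
    show "(\<Sum>n. exp (-1) * fact n - D n) = exp (-1) * (LBINT t=0..-1. exp (-t) / (1 - t))"
      unfolding a2 LB by simp
    show "exp (-1) * (LBINT t=0..-1. exp (-t) / (1 - t)) = exp (-1) * (\<Sum>n. D n * (-1) ^ (n + 1) / fact (n + 1))"
      unfolding b2 LB by (rule refl)
  qed
qed

end
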